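(* Let $\Delta\subset\mathbb{S}^2$ be a prime flag complex. If $\Delta$ contains a full subcomplex $B$ which is special, then $\Delta=B$. In particular, the 1-skeleton of $\Delta$ is $\mathcal{CFS}$ if and only if $\Delta$ is special.
   Context: A flag complex is a simplicial complex in which every complete subgraph of the 1-skeleton spans a simplex; a subcomplex $B$ is full if every simplex whose vertices lie in $B$ belongs to $B$. For a planar flag complex $\Delta\subset\mathbb{S}^2$, an induced 4-cycle $\sigma$ strongly separates $\Delta$ if $\Delta$ meets both components of $\mathbb{S}^2-\sigma$. $\Delta$ is prime if (1) it is connected with no separating vertex and no separating edge; (2) it is not a 4-cycle but contains an induced 4-cycle; (3) it has no strongly separating induced 4-cycle. A flag complex is special if it is (the flag complex of) the suspension of a graph with 3 vertices that is not a triangle, i.e. the join of such a graph with two non-adjacent vertices. For a graph $\Gamma$, $\Gamma^4$ has as vertices the induced 4-cycles, adjacent iff they share two non-adjacent vertices; $\Gamma$ is $\mathcal{CFS}$ if $\Gamma=\Omega*K$ with $K$ a possibly empty clique and $\Omega$ non-empty such that $\Omega^4$ has a component $T$ with every vertex of $\Omega$ lying in a 4-cycle that is a vertex of $T$. *)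

theory Defs
  imports "HOL-Analysis.Analysis"
begin

text \<open>A flag complex is represented by its 1-skeleton: a finite simple graph with
vertex set V (a subset of a finite type 'v) and symmetric irreflexive edge relation E.
Its simplices are the nonempty cliques.\<close>

definition simple_graph :: "'v set \<Rightarrow> ('v \<Rightarrow> 'v \<Rightarrow> bool) \<Rightarrow> bool" where
  "simple_graph V E \<longleftrightarrow> (\<forall>u v. E u v \<longrightarrow> u \<in> V \<and> v \<in> V \<and> u \<noteq> v \<and> E v u)"

definition clique :: "('v \<Rightarrow> 'v \<Rightarrow> bool) \<Rightarrow> 'v set \<Rightarrow> bool" where
  "clique E S \<longleftrightarrow> (\<forall>u\<in>S. \<forall>v\<in>S. u \<noteq> v \<longrightarrow> E u v)"

text \<open>Geometric realization of the flag complex of (V,E), as a subset of real^'v: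
barycentric coordinate vectors whose support is a (nonempty) clique of vertices in V.\<close>

definition realization :: "('v::finite) set \<Rightarrow> ('v \<Rightarrow> 'v \<Rightarrow> bool) \<Rightarrow> (real^'v) set" where
  "realization V E = {x. (\<forall>i. 0 \<le> x $ i) \<and> (\<Sum>i\<in>UNIV. x $ i) = 1 \<and>
      {i. x $ i \<noteq> 0} \<subseteq> V \<and> clique E {i. x $ i \<noteq> 0}}"

definition full_realization :: "('v::finite) set \<Rightarrow> ('v \<Rightarrow> 'v \<Rightarrow> bool) \<Rightarrow> 'v set \<Rightarrow> (real^'v) set" where
  "full_realization V E W = {x \<in> realization V E. \<forall>i. x $ i \<noteq> 0 \<longrightarrow> i \<in> W}"

definition sphere_embedding :: "('v::finite) set \<Rightarrow> ('v \<Rightarrow> 'v \<Rightarrow> bool) \<Rightarrow> (real^'v \<Rightarrow> real^3) \<Rightarrow> bool" where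
  "sphere_embedding V E h \<longleftrightarrow> continuous_on (realization V E) h \<and> inj_on h (realization V E) \<and>
      h ` realization V E \<subseteq> sphere 0 1"

text \<open>Induced 4-cycle, given by its vertex set (an induced cycle is determined by its vertices).\<close>

definition induced_4cycle :: "('v \<Rightarrow> 'v \<Rightarrow> bool) \<Rightarrow> 'v set \<Rightarrow> bool" where
  "induced_4cycle E C \<longleftrightarrow> (\<exists>a b c d. C = {a, b, c, d} \<and> distinct [a, b, c, d] \<and>
      E a b \<and> E b c \<and> E c d \<and> E d a \<and> \<not> E a c \<and> \<not> E b d)"

definition graph_connected :: "'v set \<Rightarrow> ('v \<Rightarrow> 'v \<Rightarrow> bool) \<Rightarrow> bool" where
  "graph_connected W E \<longleftrightarrow>
     (\<forall>u\<in>W. \<forall>v\<in>W. (\<lambda>x y. x \<in> W \<and> y \<in> W \<and> E x y)\<^sup>*\<^sup>* u v)"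

definition strongly_separates ::
  "('v::finite) set \<Rightarrow> ('v \<Rightarrow> 'v \<Rightarrow> bool) \<Rightarrow> (real^'v \<Rightarrow> real^3) \<Rightarrow> 'v set \<Rightarrow> bool" where
  "strongly_separates V E h C \<longleftrightarrow>
     (let S = sphere 0 1 - h ` full_realization V E C in
      \<exists>x \<in> h ` realization V E \<inter> S. \<exists>y \<in> h ` realization V E \<inter> S.
         \<not> connected_component S x y)"

definition prime_complex ::
  "('v::finite) set \<Rightarrow> ('v \<Rightarrow> 'v \<Rightarrow> bool) \<Rightarrow> (real^'v \<Rightarrow> real^3) \<Rightarrow> bool" where
  "prime_complex V E h \<longleftrightarrow>
     graph_connected V E \<and>
     (\<forall>v\<in>V. graph_connected (V - {v}) E) \<and>
     (\<forall>u v. E u v \<longrightarrow> graph_connected (V - {u, v}) E) \<and>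
     \<not> induced_4cycle E V \<and>
     (\<exists>C. C \<subseteq> V \<and> induced_4cycle E C) \<and>
     \<not> (\<exists>C. C \<subseteq> V \<and> induced_4cycle E C \<and> strongly_separates V E h C)"

text \<open>Special: the flag complex on W is the suspension of a 3-vertex graph that is not a
triangle (join with two non-adjacent vertices a, b).\<close>

definition special :: "'v set \<Rightarrow> ('v \<Rightarrow> 'v \<Rightarrow> bool) \<Rightarrow> bool" where
  "special W E \<longleftrightarrow> (\<exists>a b c1 c2 c3. W = {a, b, c1, c2, c3} \<and> distinct [a, b, c1, c2, c3] \<and>
      \<not> E a b \<and> (\<forall>c\<in>{c1, c2, c3}. E a c \<and> E b c) \<and> \<not> (E c1 c2 \<and> E c2 c3 \<and> E c1 c3))"

definition adj4 :: "'v set \<Rightarrow> ('v \<Rightarrow> 'v \<Rightarrow> bool) \<Rightarrow> 'v set \<Rightarrow> 'v set \<Rightarrow> bool" where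
  "adj4 \<Omega> E C D \<longleftrightarrow> C \<subseteq> \<Omega> \<and> D \<subseteq> \<Omega> \<and> induced_4cycle E C \<and> induced_4cycle E D \<and> C \<noteq> D \<and>
      (\<exists>x y. x \<in> C \<inter> D \<and> y \<in> C \<inter> D \<and> x \<noteq> y \<and> \<not> E x y)"

definition CFS :: "'v set \<Rightarrow> ('v \<Rightarrow> 'v \<Rightarrow> bool) \<Rightarrow> bool" where
  "CFS V E \<longleftrightarrow> (\<exists>\<Omega> K. \<Omega> \<union> K = V \<and> \<Omega> \<inter> K = {} \<and> \<Omega> \<noteq> {} \<and> clique E K \<and>
      (\<forall>u\<in>\<Omega>. \<forall>k\<in>K. E u k) \<and>
      (\<exists>C0. C0 \<subseteq> \<Omega> \<and> induced_4cycle E C0 \<and>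
         (\<forall>v\<in>\<Omega>. \<exists>C. (adj4 \<Omega> E)\<^sup>*\<^sup>* C0 C \<and> v \<in> C)))"

end

theory Submission
  imports Defs
begin

definition ev :: "'v::finite \<Rightarrow> real^'v" where "ev x = (\<chi> i. if i = x then 1 else 0)"
definition spt :: "real^'v::finite \<Rightarrow> 'v set" where "spt z = {i. z $ i \<noteq> 0}"

lemma ev_nth[simp]: "ev x $ i = (if i = x then 1 else 0)"
  by (simp add: ev_def)

lemma seg_props:
  fixes p q :: "'v::finite"
  assumes "z \<in> closed_segment (ev p) (ev q)"
  shows "(\<forall>i. 0 \<le> z$i) \<and> (\<Sum>i\<in>UNIV. z$i) = 1 \<and> spt z \<subseteq> {p,q}"
proof -
  obtain u where u: "0 \<le> u" "u \<le> 1" "z = (1-u) *\<^sub>R ev p + u *\<^sub>R ev q"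
    using assms by (auto simp: closed_segment_def)
  have zi: "z $ i = (if i = p then 1-u else 0) + (if i = q then u else 0)" for i
    using u by simp
  have "(\<Sum>i\<in>UNIV. z$i) = (\<Sum>i\<in>UNIV. (if i = p then 1-u else 0)) + (\<Sum>i\<in>UNIV. (if i = q then u else 0))"
    by (simp add: zi sum.distrib)
  also have "\<dots> = 1" by simp
  finally show ?thesis using u by (auto simp: zi spt_def split: if_splits)
qed

lemma sum_two:
  fixes z :: "real^'v::finite"
  assumes "spt z \<subseteq> {p,q}" "p \<noteq> q"
  shows "(\<Sum>i\<in>UNIV. z$i) = z$p + z$q"
proof -
  have "(\<Sum>i\<in>{p,q}. z$i) = (\<Sum>i\<in>UNIV. z$i)"
    by (rule sum.mono_neutral_left) (use assms in \<open>auto simp: spt_def\<close>)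
  then show ?thesis using assms by simp
qed

lemma in_seg:
  fixes z :: "real^'v::finite"
  assumes "\<forall>i. 0 \<le> z$i" "(\<Sum>i\<in>UNIV. z$i) = 1" "spt z \<subseteq> {p,q}"
  shows "z \<in> closed_segment (ev p) (ev q)"
proof (cases "p = q")
  case True
  then have "spt z \<subseteq> {p,q}" using assms by auto
  have "(\<Sum>i\<in>{p}. z$i) = (\<Sum>i\<in>UNIV. z$i)"
    by (rule sum.mono_neutral_left) (use assms True in \<open>auto simp: spt_def\<close>)
  then have s: "(\<Sum>i\<in>UNIV. z$i) = z$p" by simp
  have "z = ev p"
    unfolding vec_eq_iff using assms s True by (auto simp: spt_def)
  then show ?thesis using True by simp
next
  case False
  have s: "z$p + z$q = 1" using sum_two[OF assms(3) False] assms by simp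
  have "z = (1 - z$q) *\<^sub>R ev p + (z$q) *\<^sub>R ev q"
    unfolding vec_eq_iff using assms s False by (auto simp: spt_def)
  moreover have "0 \<le> z$q" "z$q \<le> 1" using assms s by (auto simp: add.commute) (smt (verit) assms(1))
  ultimately show ?thesis by (auto simp: closed_segment_def)
qed

lemma spt_nonempty:
  fixes z :: "real^'v::finite"
  assumes "(\<Sum>i\<in>UNIV. z$i) = 1"
  shows "spt z \<noteq> {}"
proof
  assume "spt z = {}"
  then have "\<forall>i. z$i = 0" by (auto simp: spt_def)
  then show False using assms by simp
qed

lemma spt_single:
  fixes z :: "real^'v::finite"
  assumes "(\<Sum>i\<in>UNIV. z$i) = 1" "spt z \<subseteq> {w}"
  shows "z = ev w"
proof -
  have "(\<Sum>i\<in>{w}. z$i) = (\<Sum>i\<in>UNIV. z$i)"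
    by (rule sum.mono_neutral_left) (use assms in \<open>auto simp: spt_def\<close>)
  then have s: "(\<Sum>i\<in>UNIV. z$i) = z$w" by simp
  show ?thesis unfolding vec_eq_iff using assms s by (auto simp: spt_def)
qed

lemma segint:
  assumes "z \<in> closed_segment (ev p) (ev q)" "z \<in> closed_segment (ev r) (ev s)"
    "{p,q} \<inter> {r,s} \<subseteq> {w::'v::finite}"
  shows "z = ev w"
  using seg_props[OF assms(1)] seg_props[OF assms(2)] assms(3)
  by (intro spt_single) auto

lemma realization_iff:
  "z \<in> realization V E \<longleftrightarrow> (\<forall>i. 0 \<le> z$i) \<and> (\<Sum>i\<in>UNIV. z$i) = 1 \<and> spt z \<subseteq> V \<and> clique E (spt z)"
  by (simp add: realization_def spt_def)

lemma ev_in_R: "x \<in> V \<Longrightarrow> ev x \<in> realization V E"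
proof -
  assume "x \<in> V"
  have "(\<Sum>i\<in>UNIV. ev x $ i) = 1" by simp
  moreover have "spt (ev x) = {x}" by (auto simp: spt_def)
  ultimately show ?thesis using \<open>x \<in> V\<close> by (auto simp: realization_iff clique_def)
qed

lemma seg_in_R:
  assumes "simple_graph V E" "E p q"
  shows "closed_segment (ev p) (ev q) \<subseteq> realization V E"
proof
  fix z assume z: "z \<in> closed_segment (ev p) (ev q)"
  have V: "p \<in> V" "q \<in> V" "E q p" using assms by (auto simp: simple_graph_def)
  show "z \<in> realization V E"
    using seg_props[OF z] V assms(2) by (auto simp: realization_iff clique_def)
qed

lemma ev_inj[simp]: "ev x = ev y \<longleftrightarrow> x = y"
  by (metis ev_nth zero_neq_one)

lemma stereo:
  assumes "p \<in> sphere (0::real^3) 1"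
  shows "\<exists>\<phi> \<psi>. homeomorphism (sphere 0 1 - {p}) (UNIV::complex set) \<phi> \<psi>"
proof -
  have "(sphere (0::real^3) 1 - {p}) homeomorphic {x::real^3. axis 1 1 \<bullet> x = 0}"
    by (rule homeomorphic_punctured_sphere_hyperplane) (use assms in \<open>auto simp: axis_eq_0_iff\<close>)
  also have "\<dots> homeomorphic (UNIV::complex set)"
  proof -
    have "aff_dim {x::real^3. axis 1 1 \<bullet> x = 0} = 2"
      by (subst aff_dim_hyperplane) (auto simp: axis_eq_0_iff)
    then show ?thesis
      by (subst homeomorphic_affine_sets_eq) (auto simp: affine_hyperplane)
  qed
  finally show ?thesis by (auto simp: homeomorphic_def)
qed

lemma clopen_conn:
  assumes "connected X" "open A" "closure A \<inter> X \<subseteq> A"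
  shows "X \<inter> A = {} \<or> X \<subseteq> A"
proof -
  have "A \<inter> X = {} \<or> (- closure A) \<inter> X = {}"
    by (rule connectedD[OF assms(1) assms(2), of "- closure A"]) (use assms closure_subset in auto)
  then show ?thesis using assms(3) by auto
qed

lemma sep:
  fixes \<phi> :: "real^3 \<Rightarrow> complex"
  assumes hom: "homeomorphism (sphere 0 1 - {p}) UNIV \<phi> \<psi>"
    and J: "J \<subseteq> sphere 0 1 - {p}"
    and I: "open I" "bounded I" "closure I \<subseteq> I \<union> \<phi> ` J"
    and y: "y \<in> sphere 0 1 - {p}" "\<phi> y \<in> I"
    and x: "x \<in> sphere 0 1 - J" "x \<notin> \<psi> ` I"
  shows "\<not> connected_component (sphere 0 1 - J) y x"
proof
  assume cc: "connected_component (sphere 0 1 - J) y x"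
  let ?Q = "\<psi> ` I"
  have hs: "homeomorphism UNIV (sphere 0 1 - {p}) \<psi> \<phi>"
    using hom homeomorphism_sym by blast
  have "openin (top_of_set (sphere 0 1 - {p})) ?Q"
    by (rule homeomorphism_imp_open_map[OF hs]) (simp add: I)
  then obtain A where A: "open A" "?Q = (sphere 0 1 - {p}) \<inter> A"
    by (auto simp: openin_open)
  have contpsi: "continuous_on UNIV \<psi>" and psiim: "\<psi> ` UNIV = sphere 0 1 - {p}"
    and psiphi: "\<And>z. z \<in> sphere 0 1 - {p} \<Longrightarrow> \<psi> (\<phi> z) = z"
    using hom by (auto simp: homeomorphism_def)
  define C where "C = \<psi> ` closure I"
  have "compact (closure I)" using I by (simp add: compact_closure)
  then have cC: "compact C" unfolding C_def
    by (rule compact_continuous_image[OF continuous_on_subset[OF contpsi], rotated]) auto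
  have QC: "?Q \<subseteq> C" unfolding C_def using closure_subset by blast
  have CQJ: "C \<subseteq> ?Q \<union> J"
  proof -
    have "C \<subseteq> \<psi> ` (I \<union> \<phi> ` J)" unfolding C_def by (rule image_mono[OF I(3)])
    also have "\<dots> = ?Q \<union> \<psi> ` \<phi> ` J" by (rule image_Un)
    also have "\<psi> ` \<phi> ` J = (\<lambda>x. x) ` J" unfolding image_image
      by (rule image_cong) (use J psiphi in blast)+
    also have "(\<lambda>x. x) ` J = J" by simp
    finally show ?thesis .
  qed
  have QS: "?Q \<subseteq> sphere 0 1 - {p}" using psiim by blast
  obtain T where T: "connected T" "T \<subseteq> sphere 0 1 - J" "y \<in> T" "x \<in> T"
    using cc by (auto simp: connected_component_def)
  have "(A - {p}) \<inter> T = {} \<or> (- C) \<inter> T = {}"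
  proof (rule connectedD[OF T(1)])
    show "open (A - {p})" using A(1) by (simp add: open_delete)
    show "open (- C)" using cC by (simp add: compact_imp_closed open_Compl)
    show "T \<subseteq> (A - {p}) \<union> - C"
    proof
      fix t assume t: "t \<in> T"
      show "t \<in> (A - {p}) \<union> - C"
      proof (cases "t \<in> C")
        case True
        then have "t \<in> ?Q" using CQJ T(2) t by blast
        then have "t \<in> A" "t \<noteq> p" using A(2) by auto
        then show ?thesis by simp
      qed simp
    qed
    show "(A - {p}) \<inter> - C \<inter> T = {}"
    proof -
      { fix t assume t: "t \<in> A" "t \<noteq> p" "t \<notin> C" "t \<in> T"
        then have "t \<in> sphere 0 1" using T(2) by auto
        then have "t \<in> ?Q" using A(2) t by auto
        then have False using QC t by auto }
      then show ?thesis by auto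
    qed
  qed
  moreover have "y \<in> (A - {p}) \<inter> T"
  proof -
    have "y = \<psi> (\<phi> y)" using psiphi y(1) by simp
    then have "y \<in> ?Q" using y(2) by (metis imageI)
    then have "y \<in> A" "y \<noteq> p" using A(2) by auto
    then show ?thesis using T(3) by simp
  qed
  moreover have "x \<in> (- C) \<inter> T"
  proof -
    have "x \<notin> C" using CQJ x by auto
    then show ?thesis using T(4) by simp
  qed
  ultimately show False by blast
qed

lemma infty:
  fixes \<phi> :: "real^3 \<Rightarrow> complex"
  assumes hom: "homeomorphism (sphere 0 1 - {p}) UNIV \<phi> \<psi>"
    and Ou: "connected Ou" "\<not> bounded Ou"
  shows "connected (insert p (\<psi> ` Ou))"
proof -
  have contpsi: "continuous_on UNIV \<psi>" and psiim: "\<psi> ` UNIV = sphere 0 1 - {p}"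
    and phipsi: "\<And>z. \<phi> (\<psi> z) = z" and contphi: "continuous_on (sphere 0 1 - {p}) \<phi>"
    using hom by (auto simp: homeomorphism_def)
  have c: "connected (\<psi> ` Ou)"
    using Ou(1) by (rule connected_continuous_image[OF continuous_on_subset[OF contpsi], rotated]) auto
  have "p \<in> closure (\<psi> ` Ou)"
  proof (rule ccontr)
    assume "p \<notin> closure (\<psi> ` Ou)"
    then obtain e where e0: "e > 0" "ball p e \<subseteq> - closure (\<psi> ` Ou)"
      using open_contains_ball[of "- closure (\<psi> ` Ou)"] by auto
    have cs: "\<psi> ` Ou \<subseteq> closure (\<psi> ` Ou)" by (rule closure_subset)
    have e: "e > 0" "ball p e \<inter> \<psi> ` Ou = {}"
      using e0(1) apply simp
      using e0(2) cs by blast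
    define K where "K = sphere (0::real^3) 1 - ball p e"
    have cK: "compact K" unfolding K_def by (simp add: compact_diff)
    have KS: "K \<subseteq> sphere 0 1 - {p}" unfolding K_def using e by auto
    have "\<psi> ` Ou \<subseteq> \<psi> ` UNIV" by auto
    then have "\<psi> ` Ou \<subseteq> K" unfolding K_def using psiim e by auto
    moreover have "Ou = \<phi> ` \<psi> ` Ou" unfolding image_image using phipsi by simp
    ultimately have "Ou \<subseteq> \<phi> ` K" by (metis image_mono)
    moreover have "compact (\<phi> ` K)"
      using cK by (rule compact_continuous_image[OF continuous_on_subset[OF contphi KS], rotated])
    ultimately have "bounded Ou" by (meson bounded_subset compact_imp_bounded)
    then show False using Ou(2) by simp
  qed
  then show ?thesis
    by (intro connected_intermediate_closure[OF c]) (auto intro: closure_subset[THEN subsetD])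
qed

definition pth :: "'v::finite \<Rightarrow> 'v \<Rightarrow> 'v \<Rightarrow> real \<Rightarrow> real^'v" where
  "pth a c b = linepath (ev a) (ev c) +++ linepath (ev c) (ev b)"

definition SEGS :: "'v::finite \<Rightarrow> 'v \<Rightarrow> 'v \<Rightarrow> (real^'v) set" where
  "SEGS a c b = closed_segment (ev a) (ev c) \<union> closed_segment (ev c) (ev b)"

lemma pth_props:
  assumes "a \<noteq> c" "c \<noteq> b" "a \<noteq> b"
  shows "arc (pth a c b)" "path_image (pth a c b) = SEGS a c b"
    "pathstart (pth a c b) = ev a" "pathfinish (pth a c b) = ev b"
proof -
  have "path_image (linepath (ev a) (ev c)) \<inter> path_image (linepath (ev c) (ev b)) \<subseteq> {ev c}"
  proof
    fix z assume "z \<in> path_image (linepath (ev a) (ev c)) \<inter> path_image (linepath (ev c) (ev b))"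
    then have "z = ev c" by (intro segint[of z a c c b c]) (use assms in auto)
    then show "z \<in> {ev c}" by simp
  qed
  then show "arc (pth a c b)" unfolding pth_def
    by (intro arc_join) (use assms in auto)
  show "path_image (pth a c b) = SEGS a c b" unfolding pth_def SEGS_def
    by (subst path_image_join) auto
  show "pathstart (pth a c b) = ev a" "pathfinish (pth a c b) = ev b"
    unfolding pth_def by auto
qed

lemma arc_comp:
  assumes "arc g" "continuous_on (path_image g) f" "inj_on f (path_image g)"
  shows "arc (f \<circ> g)"
  using assms unfolding arc_def
  by (auto intro: path_continuous_image comp_inj_on simp: path_image_def)

lemma theta_int:
  assumes "distinct [a,b,u,w::'v::finite]"
  shows "SEGS a u b \<inter> SEGS a w b = {ev a, ev b}"
proof
  show "SEGS a u b \<inter> SEGS a w b \<subseteq> {ev a, ev b}"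
  proof
    fix z assume z: "z \<in> SEGS a u b \<inter> SEGS a w b"
    then consider "z \<in> closed_segment (ev a) (ev u)" "z \<in> closed_segment (ev a) (ev w)"
      | "z \<in> closed_segment (ev a) (ev u)" "z \<in> closed_segment (ev w) (ev b)"
      | "z \<in> closed_segment (ev u) (ev b)" "z \<in> closed_segment (ev a) (ev w)"
      | "z \<in> closed_segment (ev u) (ev b)" "z \<in> closed_segment (ev w) (ev b)"
      unfolding SEGS_def by blast
    then show "z \<in> {ev a, ev b}"
    proof cases
      case 1 then have "z = ev a" by (intro segint[OF 1(1) 1(2)]) (use assms in auto)
      then show ?thesis by simp
    next
      case 2 then have "z = ev a" by (intro segint[OF 2(1) 2(2)]) (use assms in auto)
      then show ?thesis by simp
    next
      case 3 then have "z = ev b" by (intro segint[OF 3(1) 3(2)]) (use assms in auto)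
      then show ?thesis by simp
    next
      case 4 then have "z = ev b" by (intro segint[OF 4(1) 4(2)]) (use assms in auto)
      then show ?thesis by simp
    qed
  qed
  show "{ev a, ev b} \<subseteq> SEGS a u b \<inter> SEGS a w b"
    unfolding SEGS_def by auto
qed

lemma SEGS_sub_R:
  assumes "simple_graph V E" "E a u" "E u b"
  shows "SEGS a u b \<subseteq> realization V E"
  unfolding SEGS_def using seg_in_R[OF assms(1,2)] seg_in_R[OF assms(1,3)] by auto

lemma full_cycle:
  assumes sg: "simple_graph V E" and d: "distinct [a,u,b,w]"
    and e: "E a u" "E u b" "E b w" "E w a" "\<not> E a b" "\<not> E u w"
  shows "full_realization V E {a,u,b,w} = SEGS a u b \<union> SEGS a w b"
proof
  have sym: "E x y \<Longrightarrow> E y x" for x y using sg by (auto simp: simple_graph_def)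
  show "full_realization V E {a,u,b,w} \<subseteq> SEGS a u b \<union> SEGS a w b"
  proof
    fix z assume z: "z \<in> full_realization V E {a,u,b,w}"
    then have zR: "z \<in> realization V E" and sp: "spt z \<subseteq> {a,u,b,w}"
      by (auto simp: full_realization_def spt_def)
    have nn: "\<forall>i. 0 \<le> z$i" "(\<Sum>i\<in>UNIV. z$i) = 1" and cl: "clique E (spt z)"
      using zR by (auto simp: realization_iff)
    have nab: "\<not> (a \<in> spt z \<and> b \<in> spt z)" using cl e(5) d by (auto simp: clique_def)
    have nuw: "\<not> (u \<in> spt z \<and> w \<in> spt z)" using cl e(6) d by (auto simp: clique_def)
    have "spt z \<subseteq> {a,u} \<or> spt z \<subseteq> {a,w} \<or> spt z \<subseteq> {u,b} \<or> spt z \<subseteq> {w,b}"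
      using sp nab nuw by blast
    then show "z \<in> SEGS a u b \<union> SEGS a w b"
      unfolding SEGS_def using in_seg[OF nn] by blast
  qed
  show "SEGS a u b \<union> SEGS a w b \<subseteq> full_realization V E {a,u,b,w}"
  proof
    fix z assume z: "z \<in> SEGS a u b \<union> SEGS a w b"
    have "z \<in> realization V E"
      using z SEGS_sub_R[OF sg e(1,2)] SEGS_sub_R[OF sg sym[OF e(4)] sym[OF e(3)]] by blast
    moreover have "spt z \<subseteq> {a,u,b,w}"
      using z seg_props unfolding SEGS_def by blast
    ultimately show "z \<in> full_realization V E {a,u,b,w}"
      by (auto simp: full_realization_def spt_def)
  qed
qed

definition Pd :: "'v::finite \<Rightarrow> 'v \<Rightarrow> 'v \<Rightarrow> 'v \<Rightarrow> complex \<Rightarrow> real^'v" where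
  "Pd a u b w z = (\<chi> i. if i = a then max 0 (- Re z) else if i = b then max 0 (Re z)
      else if i = u then (1 - \<bar>Re z\<bar> - Im z) / 2 else if i = w then (1 - \<bar>Re z\<bar> + Im z) / 2 else 0)"

definition Dopen :: "complex set" where "Dopen = {z. \<bar>Re z\<bar> + \<bar>Im z\<bar> < 1}"
definition Dclosed :: "complex set" where "Dclosed = {z. \<bar>Re z\<bar> + \<bar>Im z\<bar> \<le> 1}"

lemma open_Dopen: "open Dopen"
  unfolding Dopen_def by (intro open_Collect_less continuous_intros)

lemma compact_Dclosed: "compact Dclosed"
proof -
  have "closed Dclosed" unfolding Dclosed_def by (intro closed_Collect_le continuous_intros)
  moreover have "Dclosed \<subseteq> cball 0 2"
  proof
    fix z assume "z \<in> Dclosed"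
    then have "cmod z \<le> \<bar>Re z\<bar> + \<bar>Im z\<bar>" "\<bar>Re z\<bar> + \<bar>Im z\<bar> \<le> 1"
      by (auto simp: Dclosed_def cmod_le)
    then show "z \<in> cball 0 2" by simp
  qed
  ultimately show ?thesis by (meson bounded_cball bounded_subset compact_eq_bounded_closed)
qed

lemma Dopen_sub: "Dopen \<subseteq> Dclosed" by (auto simp: Dopen_def Dclosed_def)

lemma zero_Dopen: "0 \<in> Dopen" by (simp add: Dopen_def)

context
  fixes a u b w :: "'v::finite"
  assumes d: "distinct [a,u,b,w]"
begin

lemma Pd_nth:
  "Pd a u b w z $ a = max 0 (- Re z)" "Pd a u b w z $ b = max 0 (Re z)"
  "Pd a u b w z $ u = (1 - \<bar>Re z\<bar> - Im z) / 2" "Pd a u b w z $ w = (1 - \<bar>Re z\<bar> + Im z) / 2"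
  "i \<notin> {a,u,b,w} \<Longrightarrow> Pd a u b w z $ i = 0"
  using d by (auto simp: Pd_def)

lemma Pd_cont: "continuous_on S (Pd a u b w)"
  unfolding Pd_def
  apply (rule continuous_on_vec_lambda)
  subgoal for i by (cases "i = a"; cases "i = b"; cases "i = u"; cases "i = w") (auto intro!: continuous_intros)
  done

lemma Pd_inj: "inj_on (Pd a u b w) S"
proof
  fix z1 z2 assume "Pd a u b w z1 = Pd a u b w z2"
  then have "Pd a u b w z1 $ b - Pd a u b w z1 $ a = Pd a u b w z2 $ b - Pd a u b w z2 $ a"
    "Pd a u b w z1 $ w - Pd a u b w z1 $ u = Pd a u b w z2 $ w - Pd a u b w z2 $ u" by auto
  moreover have "\<And>z. Pd a u b w z $ b - Pd a u b w z $ a = Re z" by (simp add: Pd_nth max_def)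
  moreover have "\<And>z. Pd a u b w z $ w - Pd a u b w z $ u = Im z" by (simp add: Pd_nth field_simps)
  ultimately have "Re z1 = Re z2" "Im z1 = Im z2" by metis+
  then show "z1 = z2" by (simp add: complex_eqI)
qed

lemma Pd_spt: "spt (Pd a u b w z) \<subseteq> {a,u,w} \<or> spt (Pd a u b w z) \<subseteq> {b,u,w}"
proof -
  have "spt (Pd a u b w z) \<subseteq> {a,u,b,w}" using Pd_nth(5) by (auto simp: spt_def)
  moreover have "\<not> (a \<in> spt (Pd a u b w z) \<and> b \<in> spt (Pd a u b w z))"
    unfolding spt_def using Pd_nth(1,2) by auto
  ultimately show ?thesis by blast
qed

lemma Pd_sum: "(\<Sum>i\<in>UNIV. Pd a u b w z $ i) = 1"
proof -
  have "(\<Sum>i\<in>{a,u,b,w}. Pd a u b w z $ i) = (\<Sum>i\<in>UNIV. Pd a u b w z $ i)"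
    by (rule sum.mono_neutral_left) (use Pd_nth(5) in auto)
  moreover have "(\<Sum>i\<in>{a,u,b,w}. Pd a u b w z $ i) = 1"
    using d by (simp add: Pd_nth) (simp add: max_def abs_if field_simps)
  ultimately show ?thesis by simp
qed

lemma Pd_nonneg: "z \<in> Dclosed \<Longrightarrow> 0 \<le> Pd a u b w z $ i"
  by (cases "i \<in> {a,u,b,w}") (auto simp: Pd_nth Dclosed_def)

lemma Pd_R:
  assumes "z \<in> Dclosed" "simple_graph V E" "E a u" "E a w" "E u w" "E b u" "E b w"
  shows "Pd a u b w z \<in> realization V E"
proof -
  have sym: "E x y \<Longrightarrow> E y x" for x y using assms(2) by (auto simp: simple_graph_def)
  have V: "a \<in> V" "b \<in> V" "u \<in> V" "w \<in> V" using assms(2,3,7) by (auto simp: simple_graph_def)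
  have c1: "clique E {a,u,w}" "clique E {b,u,w}"
    using assms(3-7) sym by (auto simp: clique_def)
  have cs: "clique E T \<Longrightarrow> S \<subseteq> T \<Longrightarrow> clique E S" for S T by (auto simp: clique_def)
  have "clique E (spt (Pd a u b w z))"
    using Pd_spt c1 cs by blast
  moreover have "spt (Pd a u b w z) \<subseteq> V" using Pd_spt V by blast
  ultimately show ?thesis
    using Pd_sum Pd_nonneg[OF assms(1)] by (auto simp: realization_iff)
qed

lemma Pd_open_pos: "z \<in> Dopen \<Longrightarrow> 0 < Pd a u b w z $ u \<and> 0 < Pd a u b w z $ w"
  by (auto simp: Pd_nth Dopen_def)

lemma Pd_bdry: "z \<in> Dclosed - Dopen \<Longrightarrow> Pd a u b w z \<in> SEGS a u b \<union> SEGS a w b"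
proof -
  assume z: "z \<in> Dclosed - Dopen"
  then have eq: "\<bar>Re z\<bar> + \<bar>Im z\<bar> = 1" by (auto simp: Dclosed_def Dopen_def)
  have sp: "spt (Pd a u b w z) \<subseteq> {a,u,b,w}" using Pd_nth(5) by (auto simp: spt_def)
  have nn: "\<forall>i. 0 \<le> Pd a u b w z $ i" using Pd_nonneg z by auto
  have "spt (Pd a u b w z) \<subseteq> {a,u} \<or> spt (Pd a u b w z) \<subseteq> {a,w} \<or>
        spt (Pd a u b w z) \<subseteq> {u,b} \<or> spt (Pd a u b w z) \<subseteq> {w,b}"
  proof (cases "Im z \<ge> 0")
    case True
    then have X: "1 - \<bar>Re z\<bar> - Im z = 0" using eq abs_of_nonneg[of "Im z"] by linarith
    have "Pd a u b w z $ u = 0" by (simp only: Pd_nth X div_0)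
    then have "u \<notin> spt (Pd a u b w z)" by (simp add: spt_def)
    then show ?thesis using sp Pd_spt[of z] by blast
  next
    case False
    then have X: "1 - \<bar>Re z\<bar> + Im z = 0" using eq abs_of_neg[of "Im z"] by linarith
    have "Pd a u b w z $ w = 0" by (simp only: Pd_nth X div_0)
    then have "w \<notin> spt (Pd a u b w z)" by (simp add: spt_def)
    then show ?thesis using sp Pd_spt[of z] by blast
  qed
  then show ?thesis unfolding SEGS_def using in_seg[OF nn Pd_sum] by blast
qed

end

lemma loop_props:
  fixes f :: "real^'v::finite \<Rightarrow> complex"
  assumes d: "distinct [a,b,u,w]"
    and cont: "continuous_on (SEGS a u b \<union> SEGS a w b) f"
    and inj: "inj_on f (SEGS a u b \<union> SEGS a w b)"
  shows "arc (f \<circ> pth a u b)" "arc (f \<circ> pth a w b)"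
    "path_image (f \<circ> pth a u b) = f ` SEGS a u b" "path_image (f \<circ> pth a w b) = f ` SEGS a w b"
    "pathstart (f \<circ> pth a u b) = f (ev a)" "pathfinish (f \<circ> pth a u b) = f (ev b)"
    "pathstart (f \<circ> pth a w b) = f (ev a)" "pathfinish (f \<circ> pth a w b) = f (ev b)"
    "path_image (f \<circ> pth a u b) \<inter> path_image (f \<circ> pth a w b) = {f (ev a), f (ev b)}"
    "simple_path ((f \<circ> pth a u b) +++ reversepath (f \<circ> pth a w b))"
    "path_image ((f \<circ> pth a u b) +++ reversepath (f \<circ> pth a w b)) = f ` SEGS a u b \<union> f ` SEGS a w b"
    "pathfinish ((f \<circ> pth a u b) +++ reversepath (f \<circ> pth a w b)) = pathstart ((f \<circ> pth a u b) +++ reversepath (f \<circ> pth a w b))"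
proof -
  have d1: "a \<noteq> u" "u \<noteq> b" "a \<noteq> b" "a \<noteq> w" "w \<noteq> b" using d by auto
  note P1 = pth_props[OF d1(1,2,3)] and P2 = pth_props[OF d1(4,5,3)]
  show A1: "arc (f \<circ> pth a u b)"
    by (rule arc_comp[OF P1(1)]) (use cont inj P1(2) in \<open>auto intro: continuous_on_subset inj_on_subset\<close>)
  show A2: "arc (f \<circ> pth a w b)"
    by (rule arc_comp[OF P2(1)]) (use cont inj P2(2) in \<open>auto intro: continuous_on_subset inj_on_subset\<close>)
  show I1: "path_image (f \<circ> pth a u b) = f ` SEGS a u b" "path_image (f \<circ> pth a w b) = f ` SEGS a w b"
    by (simp_all add: path_image_compose P1(2) P2(2))
  show S: "pathstart (f \<circ> pth a u b) = f (ev a)" "pathfinish (f \<circ> pth a u b) = f (ev b)"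
    "pathstart (f \<circ> pth a w b) = f (ev a)" "pathfinish (f \<circ> pth a w b) = f (ev b)"
    using P1 P2 by (simp_all add: pathstart_compose pathfinish_compose)
  have "f ` SEGS a u b \<inter> f ` SEGS a w b = f ` (SEGS a u b \<inter> SEGS a w b)"
    by (rule inj_on_image_Int[OF inj, symmetric]) auto
  also have "\<dots> = {f (ev a), f (ev b)}" using theta_int[OF d] by simp
  finally show I: "path_image (f \<circ> pth a u b) \<inter> path_image (f \<circ> pth a w b) = {f (ev a), f (ev b)}"
    using I1 by simp
  show "simple_path ((f \<circ> pth a u b) +++ reversepath (f \<circ> pth a w b))"
    using S I A1 A2 by (subst simple_path_join_loop_eq) (auto simp: arc_reversepath)
  show "path_image ((f \<circ> pth a u b) +++ reversepath (f \<circ> pth a w b)) = f ` SEGS a u b \<union> f ` SEGS a w b"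
    using S I1 by (subst path_image_join) auto
  show "pathfinish ((f \<circ> pth a u b) +++ reversepath (f \<circ> pth a w b)) = pathstart ((f \<circ> pth a u b) +++ reversepath (f \<circ> pth a w b))"
    using S by simp
qed

lemma compact_SEGS: "compact (SEGS a u b)"
  unfolding SEGS_def by (intro compact_Un compact_segment)

lemma ev_notin_SEGS: "v \<notin> {a,u,b} \<Longrightarrow> ev v \<notin> SEGS a u b"
proof
  assume v: "v \<notin> {a,u,b}" and "ev v \<in> SEGS a u b"
  then have "spt (ev v) \<subseteq> {a,u} \<or> spt (ev v) \<subseteq> {u,b}"
    unfolding SEGS_def using seg_props by blast
  moreover have "v \<in> spt (ev v)" by (simp add: spt_def)
  ultimately show False using v by blast
qed

context
  fixes V :: "'v::finite set" and E and h :: "real^'v \<Rightarrow> real^3"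
  assumes sg: "simple_graph V E" and emb: "sphere_embedding V E h"
begin

lemma hcont: "continuous_on (realization V E) h" and hinj: "inj_on h (realization V E)"
  and him: "h ` realization V E \<subseteq> sphere 0 1"
  using emb by (auto simp: sphere_embedding_def)

lemma Esym: "E x y \<Longrightarrow> E y x" using sg by (auto simp: simple_graph_def)

lemma f_facts:
  fixes \<phi> :: "real^3 \<Rightarrow> complex"
  assumes hom: "homeomorphism (sphere 0 1 - {p}) UNIV \<phi> \<psi>" and p: "p \<notin> h ` realization V E"
  shows "continuous_on (realization V E) (\<phi> \<circ> h)" "inj_on (\<phi> \<circ> h) (realization V E)"
proof -
  have sub: "h ` realization V E \<subseteq> sphere 0 1 - {p}" using him p by blast
  have pc: "continuous_on (sphere 0 1 - {p}) \<phi>" and pinj: "inj_on \<phi> (sphere 0 1 - {p})"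
    using hom by (auto simp: homeomorphism_def intro: inj_on_inverseI)
  show "continuous_on (realization V E) (\<phi> \<circ> h)"
    by (rule continuous_on_compose[OF hcont continuous_on_subset[OF pc sub]])
  show "inj_on (\<phi> \<circ> h) (realization V E)"
    by (rule comp_inj_on[OF hinj inj_on_subset[OF pinj sub]])
qed

lemma disc_contra:
  fixes \<phi> :: "real^3 \<Rightarrow> complex"
  assumes hom: "homeomorphism (sphere 0 1 - {p}) UNIV \<phi> \<psi>" and p: "p \<notin> h ` realization V E"
    and d: "distinct [a,u,b,w,v]" and vV: "v \<in> V"
    and e: "E a u" "E a w" "E u w" "E b u" "E b w"
    and vin: "\<phi> (h (ev v)) \<in> inside ((\<phi> \<circ> h) ` SEGS a u b \<union> (\<phi> \<circ> h) ` SEGS a w b)"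
  shows False
proof -
  let ?R = "realization V E" and ?f = "\<phi> \<circ> h"
  define K where "K = ?f ` SEGS a u b \<union> ?f ` SEGS a w b"
  have d4: "distinct [a,u,b,w]" and d4': "distinct [a,b,u,w]" using d by auto
  note fc = f_facts[OF hom p]
  have S1: "SEGS a u b \<subseteq> ?R" by (rule SEGS_sub_R[OF sg e(1) Esym[OF e(4)]])
  have S2: "SEGS a w b \<subseteq> ?R" by (rule SEGS_sub_R[OF sg e(2) Esym[OF e(5)]])
  have SS: "SEGS a u b \<union> SEGS a w b \<subseteq> ?R" using S1 S2 by blast
  note L = loop_props[OF d4' continuous_on_subset[OF fc(1) SS] inj_on_subset[OF fc(2) SS]]
  have J: "connected (inside K)" using Jordan_inside_outside[OF L(10) L(12)] L(11) by (simp add: K_def)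
  have cK: "compact K" unfolding K_def
    by (intro compact_Un compact_continuous_image compact_SEGS continuous_on_subset[OF fc(1)] S1 S2)
  then have bK: "bounded K" and clK: "closed K" by (auto intro: compact_imp_bounded compact_imp_closed)
  define g where "g = ?f \<circ> Pd a u b w"
  define Ou where "Ou = g ` Dopen"
  have PdR: "z \<in> Dclosed \<Longrightarrow> Pd a u b w z \<in> ?R" for z
    by (rule Pd_R[OF d4 _ sg e(1,2,3,4,5)])
  have PdRs: "Pd a u b w ` Dclosed \<subseteq> ?R" using PdR by blast
  have gcont: "continuous_on Dclosed g" unfolding g_def
    by (rule continuous_on_compose[OF Pd_cont[OF d4] continuous_on_subset[OF fc(1) PdRs]])
  have ginj: "inj_on g Dclosed" unfolding g_def
    by (rule comp_inj_on[OF Pd_inj[OF d4] inj_on_subset[OF fc(2) PdRs]])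
  have oO: "open Ou" unfolding Ou_def
    by (rule invariance_of_domain[OF continuous_on_subset[OF gcont Dopen_sub] open_Dopen inj_on_subset[OF ginj Dopen_sub]])
  have cG: "compact (g ` Dclosed)" by (rule compact_continuous_image[OF gcont compact_Dclosed])
  have GOK: "g ` Dclosed \<subseteq> Ou \<union> K"
  proof
    fix y assume "y \<in> g ` Dclosed"
    then obtain z where z: "z \<in> Dclosed" "y = g z" by blast
    show "y \<in> Ou \<union> K"
    proof (cases "z \<in> Dopen")
      case True then show ?thesis using z by (auto simp: Ou_def)
    next
      case False
      then have "Pd a u b w z \<in> SEGS a u b \<union> SEGS a w b" using Pd_bdry[OF d4] z by blast
      then show ?thesis using z by (auto simp: K_def g_def)
    qed
  qed
  have clO: "closure Ou \<subseteq> Ou \<union> K"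
  proof -
    have "closure Ou \<subseteq> g ` Dclosed"
      by (rule closure_minimal) (use Dopen_sub cG compact_imp_closed in \<open>auto simp: Ou_def\<close>)
    then show ?thesis using GOK by blast
  qed
  have bO: "bounded Ou"
  proof -
    have "Ou \<subseteq> g ` Dclosed" unfolding Ou_def using Dopen_sub by (rule image_mono)
    then show ?thesis using cG compact_imp_bounded bounded_subset by blast
  qed
  have OK: "Ou \<inter> K = {}"
  proof (rule ccontr)
    assume "Ou \<inter> K \<noteq> {}"
    then obtain z s where z: "z \<in> Dopen" "s \<in> SEGS a u b \<union> SEGS a w b" "g z = ?f s"
      unfolding Ou_def K_def by blast
    have "Pd a u b w z \<in> ?R" using PdR Dopen_sub z(1) by blast
    then have "Pd a u b w z = s" using z(2,3) fc(2) SS unfolding g_def inj_on_def by auto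
    then have "spt s \<subseteq> {a,u} \<or> spt s \<subseteq> {u,b} \<or> spt s \<subseteq> {a,w} \<or> spt s \<subseteq> {w,b}"
      using z(2) seg_props unfolding SEGS_def by blast
    moreover have "u \<in> spt s" "w \<in> spt s"
      using Pd_open_pos[OF d4 z(1)] \<open>Pd a u b w z = s\<close> by (auto simp: spt_def)
    ultimately show False using d by auto
  qed
  have cO: "connected (outside K)" by (rule connected_outside[OF bK]) simp
  have X: "closure Ou \<inter> outside K \<subseteq> Ou" using clO outside_no_overlap[of K] by blast
  have "outside K \<inter> Ou = {} \<or> outside K \<subseteq> Ou"
    by (rule clopen_conn[OF cO oO X])
  moreover have "\<not> outside K \<subseteq> Ou"
    using unbounded_outside[OF bK] bO bounded_subset by blast
  ultimately have "outside K \<inter> Ou = {}" by blast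
  moreover have "Ou \<subseteq> - K" using OK by blast
  ultimately have Oin: "Ou \<subseteq> inside K" using inside_Un_outside[of K] by blast
  have One: "Ou \<noteq> {}" using zero_Dopen by (auto simp: Ou_def)
  have X2: "closure Ou \<inter> inside K \<subseteq> Ou" using clO inside_no_overlap[of K] by blast
  have "inside K \<inter> Ou = {} \<or> inside K \<subseteq> Ou"
    by (rule clopen_conn[OF J oO X2])
  then have "inside K \<subseteq> Ou" using Oin One by blast
  then have "\<phi> (h (ev v)) \<in> Ou" using vin by (auto simp: K_def)
  then obtain z where z: "z \<in> Dopen" "?f (ev v) = g z" by (auto simp: Ou_def)
  have "ev v \<in> ?R" using ev_in_R vV by blast
  moreover have "Pd a u b w z \<in> ?R" using PdR Dopen_sub z(1) by blast
  ultimately have "ev v = Pd a u b w z" using z(2) fc(2) unfolding g_def inj_on_def by auto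
  then have "ev v $ u > 0" using Pd_open_pos[OF d4 z(1)] by simp
  then show False using d by simp
qed

end

context
  fixes V :: "'v::finite set" and E and h :: "real^'v \<Rightarrow> real^3"
  assumes sg: "simple_graph V E" and emb: "sphere_embedding V E h"
    and ns: "\<forall>C. C \<subseteq> V \<and> induced_4cycle E C \<longrightarrow> \<not> strongly_separates V E h C"
begin

lemma ns_cc:
  assumes d: "distinct [a,u,b,w]"
    and e: "E a u" "E u b" "E b w" "E w a" "\<not> E a b" "\<not> E u w"
    and x: "x \<in> h ` realization V E" "x \<notin> h ` (SEGS a u b \<union> SEGS a w b)"
    and y: "y \<in> h ` realization V E" "y \<notin> h ` (SEGS a u b \<union> SEGS a w b)"
  shows "connected_component (sphere 0 1 - h ` (SEGS a u b \<union> SEGS a w b)) x y"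
proof -
  have CV: "{a,u,b,w} \<subseteq> V" using sg e by (auto simp: simple_graph_def)
  have "induced_4cycle E {a,u,b,w}"
    unfolding induced_4cycle_def
    by (rule exI[of _ a], rule exI[of _ u], rule exI[of _ b], rule exI[of _ w]) (use d e in simp)
  then have "\<not> strongly_separates V E h {a,u,b,w}" using ns CV by blast
  moreover have F: "full_realization V E {a,u,b,w} = SEGS a u b \<union> SEGS a w b"
    by (rule full_cycle[OF sg d e])
  moreover have "x \<in> sphere 0 1" "y \<in> sphere 0 1" using x y him[OF sg emb] by auto
  ultimately have "\<not> (\<exists>x \<in> h ` realization V E \<inter> (sphere 0 1 - h ` (SEGS a u b \<union> SEGS a w b)).
      \<exists>y \<in> h ` realization V E \<inter> (sphere 0 1 - h ` (SEGS a u b \<union> SEGS a w b)).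
         \<not> connected_component (sphere 0 1 - h ` (SEGS a u b \<union> SEGS a w b)) x y)"
    unfolding strongly_separates_def Let_def F by simp
  then show ?thesis using x y \<open>x \<in> sphere 0 1\<close> \<open>y \<in> sphere 0 1\<close> by blast
qed

lemma sep_contra:
  fixes \<phi> :: "real^3 \<Rightarrow> complex"
  assumes hom: "homeomorphism (sphere 0 1 - {p}) UNIV \<phi> \<psi>" and p: "p \<notin> h ` realization V E"
    and d: "distinct [a,u,b,w]"
    and e: "E a u" "E u b" "E b w" "E w a" "\<not> E a b" "\<not> E u w"
    and r1: "r1 \<in> realization V E" "r1 \<notin> SEGS a u b \<union> SEGS a w b"
    and r2: "r2 \<in> realization V E" "r2 \<notin> SEGS a u b \<union> SEGS a w b"
    and in1: "(\<phi> \<circ> h) r1 \<in> inside ((\<phi> \<circ> h) ` SEGS a u b \<union> (\<phi> \<circ> h) ` SEGS a w b)"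
    and out2: "(\<phi> \<circ> h) r2 \<notin> inside ((\<phi> \<circ> h) ` SEGS a u b \<union> (\<phi> \<circ> h) ` SEGS a w b)"
  shows False
proof -
  let ?R = "realization V E" and ?f = "\<phi> \<circ> h"
  define Z where "Z = SEGS a u b \<union> SEGS a w b"
  define K where "K = ?f ` SEGS a u b \<union> ?f ` SEGS a w b"
  define J where "J = h ` Z"
  note fc = f_facts[OF sg emb hom p]
  note hi = hinj[OF sg emb] and hs = him[OF sg emb]
  have ZR: "Z \<subseteq> ?R" unfolding Z_def
    using SEGS_sub_R[OF sg e(1,2)] SEGS_sub_R[OF sg Esym[OF sg emb e(4)] Esym[OF sg emb e(3)]] by blast
  have KJ: "K = \<phi> ` J" unfolding K_def J_def Z_def by (auto simp: image_comp)
  have cK: "compact K" unfolding K_def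
    using ZR unfolding Z_def
    by (intro compact_Un compact_continuous_image compact_SEGS continuous_on_subset[OF fc(1)]) auto
  then have bK: "bounded K" and clK: "closed K" by (auto intro: compact_imp_bounded compact_imp_closed)
  have Jsub: "J \<subseteq> sphere 0 1 - {p}" unfolding J_def using ZR hs p by blast
  have hr2: "h r2 \<notin> J"
  proof
    assume "h r2 \<in> J"
    then obtain s where "s \<in> Z" "h r2 = h s" unfolding J_def by blast
    then have "r2 = s" using hi r2(1) ZR unfolding inj_on_def by blast
    then show False using r2 \<open>s \<in> Z\<close> Z_def by blast
  qed
  have hr1: "h r1 \<notin> J"
  proof
    assume "h r1 \<in> J"
    then obtain s where "s \<in> Z" "h r1 = h s" unfolding J_def by blast
    then have "r1 = s" using hi r1(1) ZR unfolding inj_on_def by blast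
    then show False using r1 \<open>s \<in> Z\<close> Z_def by blast
  qed
  have phipsi: "\<phi> (\<psi> y) = y" for y using hom by (simp add: homeomorphism_def)
  have "\<not> connected_component (sphere 0 1 - J) (h r1) (h r2)"
  proof (rule sep[OF hom Jsub])
    show "open (inside K)" by (rule open_inside[OF clK])
    show "bounded (inside K)" by (rule bounded_inside[OF bK])
    show "closure (inside K) \<subseteq> inside K \<union> \<phi> ` J" using closure_inside_subset[OF clK] KJ by blast
    show "h r1 \<in> sphere 0 1 - {p}" using hs r1 p by blast
    show "\<phi> (h r1) \<in> inside K" using in1 by (simp add: K_def)
    show "h r2 \<in> sphere 0 1 - J" using hs r2 hr2 by blast
    show "h r2 \<notin> \<psi> ` inside K"
    proof
      assume "h r2 \<in> \<psi> ` inside K"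
      then obtain i where "i \<in> inside K" "h r2 = \<psi> i" by blast
      then have "\<phi> (h r2) = i" using phipsi by simp
      then show False using out2 \<open>i \<in> inside K\<close> by (simp add: K_def)
    qed
  qed
  moreover have "connected_component (sphere 0 1 - J) (h r1) (h r2)"
    unfolding J_def Z_def
    by (rule ns_cc[OF d e]) (use r1 r2 hr1 hr2 in \<open>auto simp: J_def Z_def\<close>)
  ultimately show False by simp
qed

lemma side:
  fixes \<phi> :: "real^3 \<Rightarrow> complex"
  assumes hom: "homeomorphism (sphere 0 1 - {p}) UNIV \<phi> \<psi>" and p: "p \<notin> h ` realization V E"
    and d: "distinct [a,u,b,w,v,z]" and vz: "v \<in> V" "z \<in> V"
    and e: "E a u" "E b u" "E a w" "E b w" "\<not> E a b"
    and in1: "(\<phi> \<circ> h) (ev v) \<in> inside ((\<phi> \<circ> h) ` SEGS a u b \<union> (\<phi> \<circ> h) ` SEGS a w b)"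
    and out2: "(\<phi> \<circ> h) (ev z) \<notin> inside ((\<phi> \<circ> h) ` SEGS a u b \<union> (\<phi> \<circ> h) ` SEGS a w b)"
  shows False
proof (cases "E u w")
  case True
  show False
    by (rule disc_contra[OF sg emb hom p _ vz(1) e(1,3) True e(2,4)]) (use d in1 in auto)
next
  case False
  have nv: "ev v \<notin> SEGS a u b \<union> SEGS a w b" using ev_notin_SEGS[of v a u b] ev_notin_SEGS[of v a w b] d by auto
  have nz: "ev z \<notin> SEGS a u b \<union> SEGS a w b" using ev_notin_SEGS[of z a u b] ev_notin_SEGS[of z a w b] d by auto
  show False
    by (rule sep_contra[OF hom p _ e(1) Esym[OF sg emb e(2)] e(4) Esym[OF sg emb e(3)] e(5) False
          ev_in_R[OF vz(1)] nv ev_in_R[OF vz(2)] nz in1 out2]) (use d in auto)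
qed

end

lemma core:
  fixes V :: "'v::finite set" and E and h :: "real^'v \<Rightarrow> real^3"
  assumes sg: "simple_graph V E" and emb: "sphere_embedding V E h"
    and ns: "\<forall>C. C \<subseteq> V \<and> induced_4cycle E C \<longrightarrow> \<not> strongly_separates V E h C"
    and d: "distinct [a,b,c1,c2,c3,v]" and vV: "v \<in> V"
    and e: "\<not> E a b" "E a c1" "E b c1" "E a c2" "E b c2" "E a c3" "E b c3" "\<not> E c1 c2"
  shows False
proof -
  let ?R = "realization V E"
  note hc = hcont[OF sg emb] and hi = hinj[OF sg emb] and hs = him[OF sg emb]
  note sym = Esym[OF sg emb]
  have V: "a \<in> V" "b \<in> V" "c1 \<in> V" "c2 \<in> V" "c3 \<in> V" using sg e by (auto simp: simple_graph_def)
  define Z where "Z = SEGS a c1 b \<union> SEGS a c2 b"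
  define J where "J = h ` Z"
  have S1: "SEGS a c1 b \<subseteq> ?R" by (rule SEGS_sub_R[OF sg e(2) sym[OF e(3)]])
  have S2: "SEGS a c2 b \<subseteq> ?R" by (rule SEGS_sub_R[OF sg e(4) sym[OF e(5)]])
  have S3: "SEGS a c3 b \<subseteq> ?R" by (rule SEGS_sub_R[OF sg e(6) sym[OF e(7)]])
  have ZR: "Z \<subseteq> ?R" using S1 S2 Z_def by blast
  have evR: "x \<in> V \<Longrightarrow> ev x \<in> ?R" for x by (rule ev_in_R)
  have notZ: "x \<notin> {a,b,c1,c2} \<Longrightarrow> ev x \<notin> Z" for x
    unfolding Z_def using ev_notin_SEGS[of x a c1 b] ev_notin_SEGS[of x a c2 b] by auto
  have hZ: "r \<in> ?R \<Longrightarrow> r \<notin> Z \<Longrightarrow> h r \<notin> J" for r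
  proof
    assume r: "r \<in> ?R" "r \<notin> Z" "h r \<in> J"
    then obtain s where "s \<in> Z" "h r = h s" unfolding J_def by blast
    then have "r = s" using hi r(1) ZR unfolding inj_on_def by blast
    then show False using r \<open>s \<in> Z\<close> by blast
  qed
  have cc: "connected_component (sphere 0 1 - J) x y"
    if "x \<in> h ` ?R" "x \<notin> J" "y \<in> h ` ?R" "y \<notin> J" for x y
    unfolding J_def Z_def
    by (rule ns_cc[OF sg emb ns, of a c1 b c2]) (use d e sym that in \<open>auto simp: J_def Z_def\<close>)
  define p3 where "p3 = h (ev c3)"
  have p3S: "p3 \<in> sphere 0 1" using hs evR[OF V(5)] p3_def by blast
  have p3J: "p3 \<notin> J" unfolding p3_def by (rule hZ[OF evR[OF V(5)] notZ]) (use d in auto)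
  obtain \<phi>1 :: "real^3 \<Rightarrow> complex" and \<psi>1 where hom1: "homeomorphism (sphere 0 1 - {p3}) UNIV \<phi>1 \<psi>1"
    using stereo[OF p3S] by blast
  have JS1: "J \<subseteq> sphere 0 1 - {p3}" using hs ZR p3J J_def by blast
  have c1: "continuous_on (sphere 0 1 - {p3}) \<phi>1" "inj_on \<phi>1 (sphere 0 1 - {p3})"
    using hom1 by (auto simp: homeomorphism_def intro: inj_on_inverseI)
  have f1c: "continuous_on Z (\<phi>1 \<circ> h)"
    by (rule continuous_on_compose[OF continuous_on_subset[OF hc ZR] continuous_on_subset[OF c1(1)]]) (use JS1 J_def in auto)
  have f1i: "inj_on (\<phi>1 \<circ> h) Z"
    by (rule comp_inj_on[OF inj_on_subset[OF hi ZR] inj_on_subset[OF c1(2)]]) (use JS1 J_def in auto)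
  have d12: "distinct [a,b,c1,c2]" using d by auto
  note L1 = loop_props[OF d12 f1c[unfolded Z_def] f1i[unfolded Z_def]]
  define K1 where "K1 = (\<phi>1 \<circ> h) ` SEGS a c1 b \<union> (\<phi>1 \<circ> h) ` SEGS a c2 b"
  have K1J: "K1 = \<phi>1 ` J" unfolding K1_def J_def Z_def by (auto simp: image_comp)
  have "inside K1 \<noteq> {}" using Jordan_inside_outside[OF L1(10) L1(12)] L1(11) by (simp add: K1_def)
  then obtain z where z: "z \<in> inside K1" by blast
  have cK1: "compact K1" unfolding K1_def
    by (intro compact_Un compact_continuous_image compact_SEGS continuous_on_subset[OF f1c]) (auto simp: Z_def)
  then have bK1: "bounded K1" and clK1: "closed K1" by (auto intro: compact_imp_bounded compact_imp_closed)
  define p' where "p' = \<psi>1 z"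
  have psi1: "\<psi>1 ` UNIV = sphere 0 1 - {p3}" "\<And>y. \<phi>1 (\<psi>1 y) = y"
    using hom1 by (auto simp: homeomorphism_def)
  have p'S: "p' \<in> sphere 0 1 - {p3}" using psi1 p'_def by blast
  have p'z: "\<phi>1 p' = z" using psi1 p'_def by simp
  have p'J: "p' \<notin> J"
  proof
    assume "p' \<in> J"
    then have "z \<in> K1" using K1J p'z by blast
    then show False using z inside_no_overlap[of K1] by blast
  qed
  have sepA: "\<not> connected_component (sphere 0 1 - J) p' p3"
  proof (rule sep[OF hom1 JS1])
    show "open (inside K1)" by (rule open_inside[OF clK1])
    show "bounded (inside K1)" by (rule bounded_inside[OF bK1])
    show "closure (inside K1) \<subseteq> inside K1 \<union> \<phi>1 ` J" using closure_inside_subset[OF clK1] K1J by blast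
    show "p' \<in> sphere 0 1 - {p3}" by (rule p'S)
    show "\<phi>1 p' \<in> inside K1" using p'z z by simp
    show "p3 \<in> sphere 0 1 - J" using p3S p3J by blast
    show "p3 \<notin> \<psi>1 ` inside K1" using psi1(1) by blast
  qed
  have p'R: "p' \<notin> h ` ?R"
  proof
    assume "p' \<in> h ` ?R"
    moreover have "p3 \<in> h ` ?R" using p3_def evR[OF V(5)] by blast
    ultimately have "connected_component (sphere 0 1 - J) p' p3" using cc p'J p3J by blast
    then show False using sepA by simp
  qed
  have p'S2: "p' \<in> sphere 0 1" using p'S by blast
  obtain \<phi> :: "real^3 \<Rightarrow> complex" and \<psi> where hom: "homeomorphism (sphere 0 1 - {p'}) UNIV \<phi> \<psi>"
    using stereo[OF p'S2] by blast
  have psi: "\<psi> ` UNIV = sphere 0 1 - {p'}" "\<And>y. \<phi> (\<psi> y) = y"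
    and phipsi: "\<And>x. x \<in> sphere 0 1 - {p'} \<Longrightarrow> \<psi> (\<phi> x) = x"
    using hom by (auto simp: homeomorphism_def)
  let ?f = "\<phi> \<circ> h"
  note fc = f_facts[OF sg emb hom p'R]
  define K where "K = ?f ` SEGS a c1 b \<union> ?f ` SEGS a c2 b"
  have KJ: "K = \<phi> ` J" unfolding K_def J_def Z_def by (auto simp: image_comp)
  have cK: "compact K" unfolding K_def
    by (intro compact_Un compact_continuous_image compact_SEGS continuous_on_subset[OF fc(1)] S1 S2)
  then have bK: "bounded K" and clK: "closed K" by (auto intro: compact_imp_bounded compact_imp_closed)
  have IN: "?f r \<in> inside K" if r: "r \<in> ?R" "r \<notin> Z" for r
  proof (rule ccontr)
    assume nin: "?f r \<notin> inside K"
    have "?f r \<notin> K"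
    proof
      assume "?f r \<in> K"
      then obtain s where "s \<in> Z" "?f r = ?f s" unfolding K_def Z_def by blast
      then have "r = s" using fc(2) r(1) ZR unfolding inj_on_def by blast
      then show False using r \<open>s \<in> Z\<close> by blast
    qed
    then have out: "?f r \<in> outside K" using nin inside_Un_outside[of K] by blast
    define T where "T = insert p' (\<psi> ` outside K)"
    have cO: "connected (outside K)" by (rule connected_outside[OF bK]) simp
    have cT: "connected T" unfolding T_def
      by (rule infty[OF hom cO unbounded_outside[OF bK]])
    have TS: "T \<subseteq> sphere 0 1 - J"
    proof
      fix t assume "t \<in> T"
      then consider "t = p'" | ot where "ot \<in> outside K" "t = \<psi> ot" unfolding T_def by blast
      then show "t \<in> sphere 0 1 - J"
      proof cases
        case 1 then show ?thesis using p'S2 p'J by simp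
      next
        case 2
        have "t \<in> sphere 0 1" using psi(1) 2 by blast
        moreover have "t \<notin> J"
        proof
          assume "t \<in> J"
          then have "\<phi> t \<in> K" using KJ by blast
          then show False using 2 psi(2) outside_no_overlap[of K] by (metis disjoint_iff)
        qed
        ultimately show ?thesis by simp
      qed
    qed
    have hrS: "h r \<in> sphere 0 1 - {p'}" using hs r p'R by blast
    have "h r \<in> T" unfolding T_def using out phipsi[OF hrS] by (metis comp_apply image_eqI insertCI)
    then have "connected_component (sphere 0 1 - J) (h r) p'"
      unfolding connected_component_def using cT TS T_def by blast
    moreover have "connected_component (sphere 0 1 - J) (h r) p3"
      using cc hZ r p3J p3_def evR[OF V(5)] by blast
    ultimately have "connected_component (sphere 0 1 - J) p' p3"
      by (meson connected_component_sym connected_component_trans)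
    then show False using sepA by simp
  qed
  have SR3: "SEGS a c1 b \<union> SEGS a c3 b \<subseteq> ?R" "SEGS a c2 b \<union> SEGS a c3 b \<subseteq> ?R" "SEGS a c1 b \<union> SEGS a c2 b \<subseteq> ?R"
    using S1 S2 S3 by blast+
  note L12 = loop_props[OF d12 continuous_on_subset[OF fc(1) SR3(3)] inj_on_subset[OF fc(2) SR3(3)]]
  note L13 = loop_props[of a b c1 c3, OF _ continuous_on_subset[OF fc(1) SR3(1)] inj_on_subset[OF fc(2) SR3(1)]]
  note L23 = loop_props[of a b c2 c3, OF _ continuous_on_subset[OF fc(1) SR3(2)] inj_on_subset[OF fc(2) SR3(2)]]
  have d13: "distinct [a,b,c1,c3]" and d23: "distinct [a,b,c2,c3]" using d by auto
  have fab: "?f (ev a) \<noteq> ?f (ev b)"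
    using fc(2) evR V d unfolding inj_on_def by (metis distinct_length_2_or_more ev_inj)
  have c3in: "?f (ev c3) \<in> path_image (?f \<circ> pth a c3 b) \<inter> inside (path_image (?f \<circ> pth a c1 b) \<union> path_image (?f \<circ> pth a c2 b))"
  proof -
    have "ev c3 \<in> SEGS a c3 b" by (simp add: SEGS_def)
    moreover have "?f (ev c3) \<in> inside K" by (rule IN[OF evR[OF V(5)] notZ]) (use d in auto)
    ultimately show ?thesis using L12(3,4) L13(3,4)[OF d13] by (auto simp: K_def)
  qed
  obtain TH: "inside (path_image (?f \<circ> pth a c1 b) \<union> path_image (?f \<circ> pth a c3 b)) \<union>
              inside (path_image (?f \<circ> pth a c2 b) \<union> path_image (?f \<circ> pth a c3 b)) \<union>
             (path_image (?f \<circ> pth a c3 b) - {?f (ev a), ?f (ev b)}) =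
             inside (path_image (?f \<circ> pth a c1 b) \<union> path_image (?f \<circ> pth a c2 b))"
    by (rule split_inside_simple_closed_curve[OF arc_imp_simple_path[OF L12(1)] L12(5,6)
          arc_imp_simple_path[OF L12(2)] L12(7,8) arc_imp_simple_path[OF L13(2)[OF d13]] L13(7,8)[OF d13]
          fab L12(9) L13(9)[OF d13] L23(9)[OF d23] ]) (use c3in in blast)
  have vin: "?f (ev v) \<in> inside K" by (rule IN[OF evR[OF vV] notZ]) (use d in auto)
  have vnot: "?f (ev v) \<notin> ?f ` SEGS a c3 b"
  proof
    assume "?f (ev v) \<in> ?f ` SEGS a c3 b"
    then obtain s where "s \<in> SEGS a c3 b" "?f (ev v) = ?f s" by blast
    then have "ev v = s" using fc(2) evR[OF vV] S3 unfolding inj_on_def by blast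
    then show False using ev_notin_SEGS[of v a c3 b] d \<open>s \<in> SEGS a c3 b\<close> by auto
  qed
  have P3: "path_image (?f \<circ> pth a c3 b) = ?f ` SEGS a c3 b" by (rule L13(4)[OF d13])
  have TH': "inside (?f ` SEGS a c1 b \<union> ?f ` SEGS a c3 b) \<union> inside (?f ` SEGS a c2 b \<union> ?f ` SEGS a c3 b)
       \<union> (?f ` SEGS a c3 b - {?f (ev a), ?f (ev b)}) = inside K"
    using TH unfolding P3 L12(3,4) K_def .
  have "?f (ev v) \<in> inside (?f ` SEGS a c1 b \<union> ?f ` SEGS a c3 b) \<union> inside (?f ` SEGS a c2 b \<union> ?f ` SEGS a c3 b)
       \<union> (?f ` SEGS a c3 b - {?f (ev a), ?f (ev b)})"
    using vin TH' by simp
  then have "?f (ev v) \<in> inside (?f ` SEGS a c1 b \<union> ?f ` SEGS a c3 b) \<or>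
        ?f (ev v) \<in> inside (?f ` SEGS a c2 b \<union> ?f ` SEGS a c3 b)"
    using vnot by blast
  moreover have "?f (ev c2) \<notin> inside (?f ` SEGS a c1 b \<union> ?f ` SEGS a c3 b)"
  proof
    assume "?f (ev c2) \<in> inside (?f ` SEGS a c1 b \<union> ?f ` SEGS a c3 b)"
    then have "?f (ev c2) \<in> inside K" using TH' by blast
    moreover have "?f (ev c2) \<in> K" unfolding K_def by (simp add: SEGS_def)
    ultimately show False using inside_no_overlap[of K] by blast
  qed
  moreover have "?f (ev c1) \<notin> inside (?f ` SEGS a c2 b \<union> ?f ` SEGS a c3 b)"
  proof
    assume "?f (ev c1) \<in> inside (?f ` SEGS a c2 b \<union> ?f ` SEGS a c3 b)"
    then have "?f (ev c1) \<in> inside K" using TH' by blast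
    moreover have "?f (ev c1) \<in> K" unfolding K_def by (simp add: SEGS_def)
    ultimately show False using inside_no_overlap[of K] by blast
  qed
  ultimately show False
  proof (elim disjE)
    assume "?f (ev v) \<in> inside (?f ` SEGS a c1 b \<union> ?f ` SEGS a c3 b)"
      "?f (ev c2) \<notin> inside (?f ` SEGS a c1 b \<union> ?f ` SEGS a c3 b)"
    then show False
      by (intro side[OF sg emb ns hom p'R, of a c1 b c3 v c2]) (use d vV V e in auto)
  next
    assume "?f (ev v) \<in> inside (?f ` SEGS a c2 b \<union> ?f ` SEGS a c3 b)"
      "?f (ev c1) \<notin> inside (?f ` SEGS a c2 b \<union> ?f ` SEGS a c3 b)"
    then show False
      by (intro side[OF sg emb ns hom p'R, of a c2 b c3 v c1]) (use d vV V e in auto)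
  qed
qed

lemma mk_special:
  assumes "distinct [s,t,c1,c2,c3]" "\<not> E s t" "E s c1" "E t c1" "E s c2" "E t c2" "E s c3" "E t c3" "\<not> E c1 c2"
  shows "special {s,t,c1,c2,c3} E"
  unfolding special_def
  by (rule exI[of _ s], rule exI[of _ t], rule exI[of _ c1], rule exI[of _ c2], rule exI[of _ c3]) (use assms in auto)

lemma mk_cycle:
  assumes "distinct [p,q,r,w]" "E p q" "E q r" "E r w" "E w p" "\<not> E p r" "\<not> E q w"
  shows "induced_4cycle E {p,q,r,w}"
  unfolding induced_4cycle_def
  by (rule exI[of _ p], rule exI[of _ q], rule exI[of _ r], rule exI[of _ w]) (use assms in simp)

lemma opp:
  assumes sym: "\<And>x y. E x y \<Longrightarrow> E y x" and D: "induced_4cycle E D"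
    and st: "s \<in> D" "t \<in> D" "s \<noteq> t" "\<not> E s t"
  obtains m n where "D = {s,t,m,n}" "distinct [s,t,m,n]" "E s m" "E t m" "E s n" "E t n" "\<not> E m n"
proof -
  obtain p q r w where D1: "D = {p,q,r,w}" "distinct [p,q,r,w]" "E p q" "E q r" "E r w" "E w p" "\<not> E p r" "\<not> E q w"
    using D unfolding induced_4cycle_def by blast
  have "(s = p \<and> t = r) \<or> (s = r \<and> t = p) \<or> (s = q \<and> t = w) \<or> (s = w \<and> t = q)"
    using st D1 sym by auto
  then show ?thesis
  proof (elim disjE)
    assume "s = p \<and> t = r" then show ?thesis using that[of q w] D1 sym by auto
  next
    assume "s = r \<and> t = p" then show ?thesis using that[of q w] D1 sym by auto
  next
    assume "s = q \<and> t = w" then show ?thesis using that[of p r] D1 sym by auto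
  next
    assume "s = w \<and> t = q" then show ?thesis using that[of p r] D1 sym by auto
  qed
qed

lemma special_CFS_aux:
  assumes sym: "\<And>x y. E x y \<Longrightarrow> E y x" and d: "distinct [a,b,c1,c2,c3]"
    and e: "\<not> E a b" "E a c1" "E b c1" "E a c2" "E b c2" "E a c3" "E b c3" "\<not> E c1 c2"
  shows "CFS {a,b,c1,c2,c3} E"
proof -
  have C0: "induced_4cycle E {a,c1,b,c2}"
    by (rule mk_cycle) (use d e sym in auto)
  have gen: "CFS {a,b,c1,c2,c3} E" if n: "\<not> E cc c3" and cc: "cc = c1 \<or> cc = c2" for cc
  proof -
    have C3: "induced_4cycle E {a,cc,b,c3}"
      by (rule mk_cycle) (use d e sym n cc in auto)
    have adj: "adj4 {a,b,c1,c2,c3} E {a,c1,b,c2} {a,cc,b,c3}"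
      unfolding adj4_def using C0 C3 d e cc by auto
    show ?thesis unfolding CFS_def
    proof (rule exI[of _ "{a,b,c1,c2,c3}"], rule exI[of _ "{}"], intro conjI)
      show "\<exists>C0. C0 \<subseteq> {a,b,c1,c2,c3} \<and> induced_4cycle E C0 \<and>
          (\<forall>v\<in>{a,b,c1,c2,c3}. \<exists>C. (adj4 {a,b,c1,c2,c3} E)\<^sup>*\<^sup>* C0 C \<and> v \<in> C)"
      proof (rule exI[of _ "{a,c1,b,c2}"], intro conjI ballI)
        fix v assume "v \<in> {a,b,c1,c2,c3}"
        then show "\<exists>C. (adj4 {a,b,c1,c2,c3} E)\<^sup>*\<^sup>* {a,c1,b,c2} C \<and> v \<in> C"
        proof (cases "v = c3")
          case True then show ?thesis using adj by blast
        next
          case False then show ?thesis using \<open>v \<in> _\<close> by blast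
        qed
      qed (use C0 in auto)
    qed (auto simp: clique_def)
  qed
  show ?thesis
  proof (cases "E c1 c3 \<and> E c2 c3")
    case True
    show ?thesis unfolding CFS_def
    proof (rule exI[of _ "{a,b,c1,c2}"], rule exI[of _ "{c3}"], intro conjI)
      show "\<exists>C0. C0 \<subseteq> {a,b,c1,c2} \<and> induced_4cycle E C0 \<and>
          (\<forall>v\<in>{a,b,c1,c2}. \<exists>C. (adj4 {a,b,c1,c2} E)\<^sup>*\<^sup>* C0 C \<and> v \<in> C)"
        by (rule exI[of _ "{a,c1,b,c2}"]) (use C0 in blast)
    qed (use d e True in \<open>auto simp: clique_def\<close>)
  next
    case False
    then show ?thesis using gen by blast
  qed
qed

lemma special_CFS:
  assumes sym: "\<And>x y. E x y \<Longrightarrow> E y x" and sp: "special V E"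
  shows "CFS V E"
proof -
  obtain a b c1 c2 c3 where S: "V = {a,b,c1,c2,c3}" "distinct [a,b,c1,c2,c3]" "\<not> E a b"
      "\<forall>c\<in>{c1,c2,c3}. E a c \<and> E b c" "\<not> (E c1 c2 \<and> E c2 c3 \<and> E c1 c3)"
    using sp unfolding special_def by blast
  consider "\<not> E c1 c2" | "\<not> E c2 c3" | "\<not> E c1 c3" using S(5) by blast
  then show ?thesis
  proof cases
    case 1
    have "CFS {a,b,c1,c2,c3} E" by (rule special_CFS_aux[OF sym]) (use S 1 in auto)
    then show ?thesis using S(1) by simp
  next
    case 2
    have "CFS {a,b,c2,c3,c1} E" by (rule special_CFS_aux[OF sym]) (use S 2 in auto)
    moreover have "{a,b,c2,c3,c1} = V" using S(1) by auto
    ultimately show ?thesis by simp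
  next
    case 3
    have "CFS {a,b,c1,c3,c2} E" by (rule special_CFS_aux[OF sym]) (use S 3 in auto)
    moreover have "{a,b,c1,c3,c2} = V" using S(1) by auto
    ultimately show ?thesis by simp
  qed
qed

lemma CFS_special_sub:
  assumes sym: "\<And>x y. E x y \<Longrightarrow> E y x" and cfs: "CFS V E" and n4: "\<not> induced_4cycle E V"
  shows "\<exists>W. W \<subseteq> V \<and> special W E"
proof -
  obtain \<Omega> K C0 where O: "\<Omega> \<union> K = V" "\<Omega> \<inter> K = {}" "clique E K" "\<forall>u\<in>\<Omega>. \<forall>k\<in>K. E u k"
    "C0 \<subseteq> \<Omega>" "induced_4cycle E C0" "\<forall>v\<in>\<Omega>. \<exists>C. (adj4 \<Omega> E)\<^sup>*\<^sup>* C0 C \<and> v \<in> C"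
    using cfs unfolding CFS_def by blast
  show ?thesis
  proof (cases "\<exists>D. adj4 \<Omega> E C0 D")
    case True
    then obtain D s t where D: "D \<subseteq> \<Omega>" "induced_4cycle E D" "C0 \<noteq> D"
      "s \<in> C0" "s \<in> D" "t \<in> C0" "t \<in> D" "s \<noteq> t" "\<not> E s t"
      unfolding adj4_def by blast
    obtain x y where X: "C0 = {s,t,x,y}" "distinct [s,t,x,y]" "E s x" "E t x" "E s y" "E t y" "\<not> E x y"
      using opp[OF sym O(6) D(4) D(6) D(8) D(9)] by blast
    obtain m n where M: "D = {s,t,m,n}" "distinct [s,t,m,n]" "E s m" "E t m" "E s n" "E t n" "\<not> E m n"
      using opp[OF sym D(2) D(5) D(7) D(8) D(9)] by blast
    have "m \<notin> {x,y} \<or> n \<notin> {x,y}"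
    proof (rule ccontr)
      assume "\<not> (m \<notin> {x,y} \<or> n \<notin> {x,y})"
      then have "{m,n} = {x,y}" using M(2) X(2) by auto
      then have "D = C0" using M(1) X(1) by auto
      then show False using D(3) by simp
    qed
    then obtain z where z: "z \<in> {m,n}" "z \<notin> {x,y}" by blast
    have "special {s,t,x,y,z} E"
      by (rule mk_special) (use X M z D(9) in auto)
    moreover have "{s,t,x,y,z} \<subseteq> V" using X(1) M(1) z D(1) O(1,5) by auto
    ultimately show ?thesis by blast
  next
    case False
    have eq: "C = C0" if "(adj4 \<Omega> E)\<^sup>*\<^sup>* C0 C" for C
      using that False by (cases rule: converse_rtranclpE) auto
    have OC: "\<Omega> = C0" using O(5,7) eq by blast
    have "K \<noteq> {}"
    proof
      assume "K = {}"
      then have "V = C0" using O(1) OC by simp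
      then show False using n4 O(6) by simp
    qed
    then obtain k where k: "k \<in> K" by blast
    obtain p q r w where D1: "C0 = {p,q,r,w}" "distinct [p,q,r,w]" "E p q" "E q r" "E r w" "E w p" "\<not> E p r" "\<not> E q w"
      using O(6) unfolding induced_4cycle_def by blast
    have kn: "k \<notin> C0" using k O(2) OC by blast
    have Ek: "E p k" "E r k" using O(4) k OC D1(1) by auto
    have "special {p,r,q,w,k} E"
      by (rule mk_special) (use D1 kn Ek sym in auto)
    moreover have "{p,r,q,w,k} \<subseteq> V" using D1(1) O(1,5) k by auto
    ultimately show ?thesis by blast
  qed
qed

theorem lemma4p9:
  fixes V :: "('v::finite) set" and E :: "'v \<Rightarrow> 'v \<Rightarrow> bool" and h :: "real^'v \<Rightarrow> real^3"
  assumes "simple_graph V E"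
    and "sphere_embedding V E h"
    and "prime_complex V E h"
  shows "(\<forall>W. W \<subseteq> V \<and> special W E \<longrightarrow> W = V) \<and> (CFS V E \<longleftrightarrow> special V E)"
proof -
  note sg = assms(1) and emb = assms(2)
  have ns: "\<forall>C. C \<subseteq> V \<and> induced_4cycle E C \<longrightarrow> \<not> strongly_separates V E h C"
    using assms(3) unfolding prime_complex_def by blast
  have n4: "\<not> induced_4cycle E V" using assms(3) unfolding prime_complex_def by blast
  have sym: "\<And>x y. E x y \<Longrightarrow> E y x" using sg by (auto simp: simple_graph_def)
  have P1: "\<forall>W. W \<subseteq> V \<and> special W E \<longrightarrow> W = V"
  proof (intro allI impI)
    fix W assume W: "W \<subseteq> V \<and> special W E"
    obtain a b c1 c2 c3 where S: "W = {a,b,c1,c2,c3}" "distinct [a,b,c1,c2,c3]" "\<not> E a b"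
        "\<forall>c\<in>{c1,c2,c3}. E a c \<and> E b c" "\<not> (E c1 c2 \<and> E c2 c3 \<and> E c1 c3)"
      using W unfolding special_def by blast
    show "W = V"
    proof (rule ccontr)
      assume "W \<noteq> V"
      then obtain v where v: "v \<in> V" "v \<notin> W" using W by blast
      consider "\<not> E c1 c2" | "\<not> E c2 c3" | "\<not> E c1 c3" using S(5) by blast
      then show False
      proof cases
        case 1 show False by (rule core[OF sg emb ns, of a b c1 c2 c3 v]) (use S v 1 in auto)
      next
        case 2 show False by (rule core[OF sg emb ns, of a b c2 c3 c1 v]) (use S v 2 in auto)
      next
        case 3 show False by (rule core[OF sg emb ns, of a b c1 c3 c2 v]) (use S v 3 in auto)
      qed
    qed
  qed
  have P2: "CFS V E \<longleftrightarrow> special V E"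
  proof
    assume "CFS V E"
    then obtain W where "W \<subseteq> V" "special W E" using CFS_special_sub[OF sym _ n4] by blast
    then show "special V E" using P1 by auto
  next
    assume "special V E"
    then show "CFS V E" using special_CFS[of E V] sym by blast
  qed
  show ?thesis using P1 P2 by blast
qed

end
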